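(* For every integer $q\ge1$ and integer $k\ge0$, (a) $\displaystyle\sum_{l_1,l_2\in\mathbb Z}H_q(l_1,l_2,k)=\begin{cases}0,&k\ge2,\\ 2^{-4q}(2q-1)c_q,&k=1,\\ 2^{-4q}c_q,&k=0;\end{cases}$ (b) $\displaystyle\sum_{l_1,l_2\in\mathbb Z}H'_q(l_1,l_2,k)=\begin{cases}0,&k\ge2,\\ 2^{-4q}(2q-1)(2q-2)c_q,&k=1,\\ 2^{-4q}(2q-1)c_q,&k=0.\end{cases}$
   Context: $(z)_k=z(z+1)\cdots(z+k-1)$ denotes the rising factorial. For integers $l_1,l_2,k$ and $q\ge1$, \[ H_q(l_{1},l_{2},k)=\frac{(-1)^{l_1+l_2}\left(-\frac{1}{2}\right)_{l_1} \left(-\frac{1}{2}\right)_{l_2} \left(\frac{1}{2}\right)_{q-l_{1}} \left(\frac{1}{2}\right)_{q-l_{2}}}{(2q-l_{1}-l_{2}-k)!\,(l_{2}-l_{1}+k)!\,(l_{1}-l_{2}+k)!\,(l_{1}+l_{2}-k)!}, \] where all Pochhammer symbols and factorials are expressed via the Gamma function ($(z)_k=\Gamma(z+k)/\Gamma(z)$, $m!=\Gamma(m+1)$), with $1/\Gamma$ vanishing at non-positive integers (so only finitely many terms are non-zero); and $H'_q(l_1,l_2,k)=(2q-l_1-l_2-k)H_q(l_1,l_2,k)$. Also $c_q=\frac{2^{4q}}{2q\binom{2q}{q}}$. *)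

theory Defs
  imports "HOL-Analysis.Analysis"
begin

definition poch_G :: "real \<Rightarrow> int \<Rightarrow> real" where
  "poch_G z k = Gamma (z + of_int k) / Gamma z"

text \<open>1/m! = 1/Gamma(m+1), with 1/Gamma vanishing at non-positive integers (rGamma).\<close>
definition inv_fact_G :: "int \<Rightarrow> real" where
  "inv_fact_G m = rGamma (of_int m + 1)"

definition H :: "int \<Rightarrow> int \<Rightarrow> int \<Rightarrow> int \<Rightarrow> real" where
  "H q l1 l2 k =
     (-1) powi (l1 + l2) * poch_G (-1/2) l1 * poch_G (-1/2) l2
       * poch_G (1/2) (q - l1) * poch_G (1/2) (q - l2)
       * inv_fact_G (2*q - l1 - l2 - k) * inv_fact_G (l2 - l1 + k)
       * inv_fact_G (l1 - l2 + k) * inv_fact_G (l1 + l2 - k)"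

definition H' :: "int \<Rightarrow> int \<Rightarrow> int \<Rightarrow> int \<Rightarrow> real" where
  "H' q l1 l2 k = of_int (2*q - l1 - l2 - k) * H q l1 l2 k"

definition c_q :: "nat \<Rightarrow> real" where
  "c_q q = 2 ^ (4*q) / (2 * real q * real ((2*q) choose q))"

end

theory Submission
  imports Defs "HOL-Computational_Algebra.Polynomial"
begin

definition Ap :: "real poly" where "Ap = [:1,0,1:]"
definition Bp :: "real poly" where "Bp = [:-1,0,1:]"
definition Qp :: "nat \<Rightarrow> nat \<Rightarrow> real poly" where "Qp L i = Ap^(L-i) * Bp^i"
definition LamG :: "(real \<Rightarrow> real) \<Rightarrow> nat \<Rightarrow> real poly \<Rightarrow> real" where
  "LamG g c p = (\<Sum>x\<le>2*c. g (real x - real c) * coeff p x)"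

lemma Ap_nz: "Ap \<noteq> 0" and Bp_nz: "Bp \<noteq> 0" by (auto simp: Ap_def Bp_def)
lemma degree_Ap: "degree Ap = 2" and degree_Bp: "degree Bp = 2" by (auto simp: Ap_def Bp_def)

lemma degree_Qp: "i \<le> L \<Longrightarrow> degree (Qp L i) = 2*L"
  unfolding Qp_def
  by (simp add: degree_mult_eq degree_power_eq Ap_nz Bp_nz degree_Ap degree_Bp)

lemma Ap_eq: "Ap = 1 + monom 1 2"
  by (rule poly_eqI) (auto simp: Ap_def coeff_pCons coeff_monom split: nat.split)
lemma poly_Ap: "poly Ap z = 1 + z^2" by (simp add: Ap_def power2_eq_square)
lemma poly_Bp: "poly Bp z = z^2 - 1" by (simp add: Bp_def power2_eq_square)
lemma poly_Qp: "poly (Qp L i) z = (1+z^2)^(L-i) * (z^2-1)^i"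
  by (simp add: Qp_def poly_Ap poly_Bp)

lemma Bp_sq: "Bp^2 = Ap^2 - smult 4 (monom 1 2)"
  by (simp add: Ap_def Bp_def monom_altdef power2_eq_square)

lemma Qp_rec: "j \<le> L \<Longrightarrow> Qp (L+2) (j+2) = Qp (L+2) j - smult 4 (monom 1 2 * Qp L j)"
proof -
  assume j: "j \<le> L"
  have e1: "L + 2 - j = (L - j) + 2" using j by simp
  have "Qp (L+2) (j+2) = Ap^(L-j) * Bp^j * Bp^2" unfolding Qp_def by (simp add: power_add mult_ac power2_eq_square)
  also have "\<dots> = Ap^(L-j) * Bp^j * Ap^2 - smult 4 (monom 1 2 * (Ap^(L-j) * Bp^j))"
    by (simp add: Bp_sq algebra_simps)
  also have "Ap^(L-j) * Bp^j * Ap^2 = Qp (L+2) j" unfolding Qp_def e1 by (simp add: power_add mult_ac power2_eq_square)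
  finally show ?thesis unfolding Qp_def by (simp add: power_add mult_ac)
qed

lemma coeff_mult_monom2: "coeff (monom 1 2 * (p::real poly)) x = (if x < 2 then 0 else coeff p (x - 2))"
  by (simp add: coeff_monom_mult)

lemma LamG_ext:
  assumes "degree p \<le> 2*c" "2*c \<le> D"
  shows "LamG g c p = (\<Sum>x\<le>D. g (real x - real c) * coeff p x)"
  unfolding LamG_def
  by (rule sum.mono_neutral_left) (use assms in \<open>auto simp: coeff_eq_0\<close>)

lemma LamG_add: "LamG g c (p + q) = LamG g c p + LamG g c q"
  by (simp add: LamG_def algebra_simps sum.distrib)
lemma LamG_diff: "LamG g c (p - q) = LamG g c p - LamG g c q"
  by (simp add: LamG_def algebra_simps sum_subtractf)
lemma LamG_smult: "LamG g c (smult a p) = a * LamG g c p"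
  by (simp add: LamG_def sum_distrib_left algebra_simps)

lemma sum_shift2: "(\<Sum>x\<le>n+2. (f::nat\<Rightarrow>'a::comm_monoid_add) x) = f 0 + f 1 + (\<Sum>y\<le>n. f (y+2))"
proof -
  have e: "n+2 = Suc (Suc n)" by simp
  show ?thesis unfolding e sum.atMost_Suc_shift by (simp add: numeral_2_eq_2 add.assoc)
qed

lemma LamG_shift:
  assumes "degree p \<le> 2*c"
  shows "LamG g (c+2) (monom 1 2 * p) = LamG g c p"
proof -
  have "LamG g (c+2) (monom 1 2 * p) = (\<Sum>x\<le>(2*c+2)+2. g (real x - real (c+2)) * coeff (monom 1 2 * p) x)"
    unfolding LamG_def by (simp add: algebra_simps)
  also have "\<dots> = (\<Sum>y\<le>2*c+2. g (real y - real c) * coeff p y)"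
    by (subst sum_shift2) (simp add: coeff_mult_monom2)
  also have "\<dots> = LamG g c p"
    by (rule LamG_ext[symmetric]) (use assms in auto)
  finally show ?thesis .
qed

lemma LamG_step:
  assumes "degree p \<le> 2*c"
  shows "LamG g (Suc c) (Ap * p) = (\<Sum>x\<le>2*c. (g (real x - real c - 1) + g (real x - real c + 1)) * coeff p x)"
proof -
  have "LamG g (Suc c) (Ap * p) = LamG g (Suc c) p + LamG g (Suc c) (monom 1 2 * p)"
    by (simp add: Ap_eq distrib_right LamG_add)
  also have "LamG g (Suc c) p = (\<Sum>x\<le>2*c. g (real x - real c - 1) * coeff p x)"
    unfolding LamG_def
    by (rule sum.mono_neutral_cong_right) (use assms in \<open>auto simp: coeff_eq_0 algebra_simps\<close>)
  also have "LamG g (Suc c) (monom 1 2 * p) = (\<Sum>y\<le>2*c. g (real y - real c + 1) * coeff p y)"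
  proof -
    have "LamG g (Suc c) (monom 1 2 * p) = (\<Sum>x\<le>(2*c)+2. g (real x - real (Suc c)) * coeff (monom 1 2 * p) x)"
      unfolding LamG_def by (simp add: algebra_simps)
    also have "\<dots> = (\<Sum>y\<le>2*c. g (real y - real c + 1) * coeff p y)"
      by (subst sum_shift2) (simp add: coeff_mult_monom2, rule sum.cong, auto simp: algebra_simps)
    finally show ?thesis .
  qed
  finally show ?thesis by (simp add: sum.distrib algebra_simps)
qed

definition evenp :: "real poly \<Rightarrow> bool" where "evenp p = (\<forall>n. odd n \<longrightarrow> coeff p n = 0)"

lemma evenp_mult: "evenp p \<Longrightarrow> evenp q \<Longrightarrow> evenp (p * q)"
  unfolding evenp_def
proof (intro allI impI)
  fix n :: nat assume p: "\<forall>n. odd n \<longrightarrow> coeff p n = 0" and q: "\<forall>n. odd n \<longrightarrow> coeff q n = 0" and n: "odd n"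
  have "coeff (p*q) n = (\<Sum>i\<le>n. coeff p i * coeff q (n-i))" by (rule coeff_mult)
  also have "\<dots> = 0"
  proof (rule sum.neutral, intro ballI)
    fix i assume "i \<in> {..n}"
    hence "i \<le> n" by simp
    hence disj: "odd i \<or> odd (n - i)" using n by (metis le_add_diff_inverse even_add)
    show "coeff p i * coeff q (n-i) = 0" using p q disj by (metis mult_zero_left mult_zero_right)
  qed
  finally show "coeff (p*q) n = 0" .
qed

lemma evenp_one: "evenp 1" by (auto simp: evenp_def coeff_1 intro: odd_pos)
lemma evenp_power: "evenp p \<Longrightarrow> evenp (p^n)"
  by (induction n) (auto intro: evenp_mult evenp_one)
lemma evenp_Ap: "evenp Ap" by (auto simp: evenp_def Ap_def coeff_pCons split: nat.split)
lemma evenp_Bp: "evenp Bp" by (auto simp: evenp_def Bp_def coeff_pCons split: nat.split)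
lemma evenp_Qp: "evenp (Qp L i)"
  unfolding Qp_def by (intro evenp_mult evenp_power evenp_Ap evenp_Bp)

lemma coeff_Ap_power: "coeff (Ap^n) x = (if even x then real (n choose (x div 2)) else 0)"
proof (induction n arbitrary: x)
  case 0
  then show ?case by (auto simp: coeff_1 elim: oddE)
next
  case (Suc n)
  have "coeff (Ap^Suc n) x = coeff (Ap^n) x + (if x < 2 then 0 else coeff (Ap^n) (x-2))"
    by (simp add: Ap_eq distrib_right coeff_mult_monom2)
  also have "\<dots> = (if even x then real (Suc n choose (x div 2)) else 0)"
  proof (cases "even x")
    case True
    then obtain m where m: "x = 2*m" by (auto elim: evenE)
    show ?thesis
    proof (cases m)
      case 0 then show ?thesis using m Suc by simp
    next
      case (Suc m')
      have "x - 2 = 2*m'" using m Suc by simp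
      then show ?thesis using m Suc \<open>even x\<close> Suc.IH by simp
    qed
  next
    case False
    then show ?thesis using Suc.IH by (auto simp: less_2_cases_iff)
  qed
  finally show ?case .
qed

lemma poly_at1: "poly p (1::real) = (\<Sum>x\<le>degree p. coeff p x)"
  using Polynomial.poly_altdef[of p 1] by simp
lemma sum_coeff_poly1:
  assumes "degree (p::real poly) \<le> D"
  shows "(\<Sum>x\<le>D. coeff p x) = poly p 1"
proof -
  have "poly p 1 = (\<Sum>x\<le>degree p. coeff p x)" by (rule poly_at1)
  also have "\<dots> = (\<Sum>x\<le>D. coeff p x)"
    by (rule sum.mono_neutral_left) (use assms in \<open>auto simp: coeff_eq_0\<close>)
  finally show ?thesis by simp
qed

lemma degree_Ap_power: "degree (Ap^n) = 2*n"
  by (simp add: degree_power_eq Ap_nz degree_Ap)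

lemma abs_pair: "\<bar>real x - real c - 1\<bar> + \<bar>real x - real c + 1\<bar> = 2 * \<bar>real x - real c\<bar> + (if x = c then 2 else 0)"
proof (cases rule: linorder_cases[of x c])
  case less
  hence "x + 1 \<le> c" by simp
  hence "real (x+1) \<le> real c" by (simp only: of_nat_le_iff)
  then show ?thesis using less by simp
next
  case greater
  hence "c + 1 \<le> x" by simp
  hence "real (c+1) \<le> real x" by (simp only: of_nat_le_iff)
  then show ?thesis using greater by simp
qed simp

lemma Lam_step:
  assumes "degree p \<le> 2*c"
  shows "LamG abs (Suc c) (Ap * p) = 2 * LamG abs c p + 2 * coeff p c"
proof -
  have "LamG abs (Suc c) (Ap * p) = (\<Sum>x\<le>2*c. (2 * \<bar>real x - real c\<bar> + (if x = c then 2 else 0)) * coeff p x)"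
    unfolding LamG_step[OF assms] by (rule sum.cong) (auto simp: abs_pair)
  also have "\<dots> = 2 * LamG abs c p + (\<Sum>x\<le>2*c. (if x = c then 2 else 0) * coeff p x)"
    by (simp add: LamG_def distrib_right sum.distrib sum_distrib_left mult.assoc)
  also have "(\<Sum>x\<le>2*c. (if x = c then 2 else 0) * coeff p x) = (\<Sum>x\<le>2*c. if x = c then 2 * coeff p c else 0)"
    by (rule sum.cong) auto
  also have "\<dots> = 2 * coeff p c"
    by (subst sum.delta) auto
  finally show ?thesis .
qed

lemma Sq_step:
  assumes "degree p \<le> 2*c"
  shows "LamG (\<lambda>t. t^2) (Suc c) (Ap * p) = 2 * LamG (\<lambda>t. t^2) c p + 2 * poly p 1"
proof -
  have "LamG (\<lambda>t. t^2) (Suc c) (Ap * p) = (\<Sum>x\<le>2*c. (2 * (real x - real c)^2 + 2) * coeff p x)"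
    unfolding LamG_step[OF assms] by (rule sum.cong) (auto simp: power2_eq_square algebra_simps)
  also have "\<dots> = 2 * LamG (\<lambda>t. t^2) c p + 2 * (\<Sum>x\<le>2*c. coeff p x)"
    by (simp add: LamG_def sum.distrib sum_distrib_left algebra_simps)
  finally show ?thesis using sum_coeff_poly1[OF assms] by simp
qed

definition Kc :: "nat \<Rightarrow> real" where "Kc q = 2 * 4^q * real q / fact q"

lemma Kc_Suc: "Kc (Suc q) = 8 * 4^q / fact q"
proof -
  have "Kc (Suc q) = (real (Suc q) * (8 * 4^q)) / (real (Suc q) * fact q)"
    unfolding Kc_def by (simp add: algebra_simps)
  also have "\<dots> = 8 * 4^q / fact q"
    by (rule mult_divide_mult_cancel_left) simp
  finally show ?thesis .
qed

lemma Lam_base: "LamG abs (2*q) (Ap^(2*q)) = Kc q * pochhammer (1/2) q"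
proof (induction q)
  case 0
  then show ?case by (simp add: LamG_def Kc_def)
next
  case (Suc q)
  have d1: "degree (Ap^(2*q)) \<le> 2*(2*q)" by (simp add: degree_Ap_power)
  have d2: "degree (Ap * Ap^(2*q)) \<le> 2*(Suc (2*q))"
    by (rule order_trans[OF degree_mult_le]) (simp add: degree_Ap degree_Ap_power)
  have "LamG abs (2 * Suc q) (Ap ^ (2 * Suc q)) = LamG abs (Suc (Suc (2*q))) (Ap * (Ap * Ap^(2*q)))"
    by (simp add: mult.assoc)
  also have "\<dots> = 2 * (2 * LamG abs (2*q) (Ap^(2*q)) + 2 * coeff (Ap^(2*q)) (2*q)) + 2 * coeff (Ap * Ap^(2*q)) (Suc (2*q))"
    by (simp add: Lam_step[OF d2] Lam_step[OF d1])
  also have "coeff (Ap * Ap^(2*q)) (Suc (2*q)) = 0"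
    using coeff_Ap_power[of "Suc (2*q)" "Suc (2*q)"] by simp
  also have "coeff (Ap^(2*q)) (2*q) = real ((2*q) choose q)" by (simp add: coeff_Ap_power)
  also have "real ((2*q) choose q) = 4^q * pochhammer (1/2) q / fact q"
  proof -
    have "real ((2*q) choose q) = fact (2*q) / (fact q * fact q)"
      by (simp add: binomial_fact mult_2)
    also have "\<dots> = 4^q * pochhammer (1/2) q / fact q"
      by (simp add: fact_double power_mult)
    finally show ?thesis .
  qed
  also note Suc.IH
  also have "2 * (2 * (Kc q * pochhammer (1 / 2) q) + 2 * (4 ^ q * pochhammer (1 / 2) q / fact q)) + 2 * 0
     = Kc (Suc q) * pochhammer (1/2) (Suc q)"
    unfolding Kc_Suc by (simp add: Kc_def pochhammer_Suc field_simps)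
  finally show ?case .
qed

lemma Sq_base: "LamG (\<lambda>t. t^2) L (Ap^L) = real L * 2^L"
proof (induction L)
  case 0
  then show ?case by (simp add: LamG_def)
next
  case (Suc L)
  have d1: "degree (Ap^L) \<le> 2*L" by (simp add: degree_Ap_power)
  show ?case using Sq_step[OF d1] Suc.IH by (simp add: poly_Ap algebra_simps)
qed

definition fq :: "nat \<Rightarrow> nat \<Rightarrow> real" where
  "fq q a = (-1)^a * pochhammer (-1/2) a * pochhammer (1/2) (q - a)"

lemma degree_Qp_le: "i \<le> L \<Longrightarrow> degree (Qp L i) \<le> 2*L"
  by (simp add: degree_Qp)

lemma LamG_rec:
  assumes "j \<le> L"
  shows "LamG g (L+2) (Qp (L+2) (j+2)) = LamG g (L+2) (Qp (L+2) j) - 4 * LamG g L (Qp L j)"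
  unfolding Qp_rec[OF assms] LamG_diff LamG_smult
  using LamG_shift[OF degree_Qp_le[OF assms]] by simp

lemma Lam_Qp_even: "a \<le> q \<Longrightarrow> LamG abs (2*q) (Qp (2*q) (2*a)) = Kc q * fq q a"
proof (induction a arbitrary: q)
  case 0
  then show ?case by (simp add: Qp_def Lam_base fq_def)
next
  case (Suc a)
  then obtain q' where q: "q = Suc q'" and a: "a \<le> q'" by (cases q) auto
  have j: "2*a \<le> 2*q'" using a by simp
  have "LamG abs (2*q) (Qp (2*q) (2*Suc a)) = LamG abs (2*q'+2) (Qp (2*q'+2) (2*a+2))"
    using q by simp
  also have "\<dots> = LamG abs (2*q'+2) (Qp (2*q'+2) (2*a)) - 4 * LamG abs (2*q') (Qp (2*q') (2*a))"
    by (rule LamG_rec[OF j])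
  also have "LamG abs (2*q'+2) (Qp (2*q'+2) (2*a)) = Kc (Suc q') * fq (Suc q') a"
    using Suc.IH[of "Suc q'"] a by simp
  also have "LamG abs (2*q') (Qp (2*q') (2*a)) = Kc q' * fq q' a"
    using Suc.IH[of q'] a by simp
  also have "Kc (Suc q') * fq (Suc q') a - 4 * (Kc q' * fq q' a) = Kc q * fq q (Suc a)"
  proof -
    have e: "Suc q' - a = Suc (q' - a)" using a by simp
    have r: "real (q' - a) = real q' - real a" using a by simp
    show ?thesis
      unfolding q fq_def Kc_Suc e pochhammer_Suc
      by (simp add: Kc_def r field_simps)
  qed
  finally show ?case .
qed

lemma sum_rev_atMost: "(\<Sum>x\<le>n. (g::nat \<Rightarrow> real) x) = (\<Sum>x\<le>n. g (n - x))"
  by (rule sum.reindex_bij_witness[where i="\<lambda>i. n - i" and j="\<lambda>i. n - i"]) auto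

lemma reflect_Ap: "reflect_poly Ap = Ap"
proof (rule poly_eqI)
  fix n :: nat
  have "n = 0 \<or> n = 1 \<or> n = 2 \<or> n > 2" by arith
  then show "coeff (reflect_poly Ap) n = coeff Ap n"
    by (auto simp: coeff_reflect_poly degree_Ap) (auto simp: Ap_def coeff_pCons coeff_eq_0 split: nat.split)
qed
lemma reflect_Bp: "reflect_poly Bp = - Bp"
proof (rule poly_eqI)
  fix n :: nat
  have "n = 0 \<or> n = 1 \<or> n = 2 \<or> n > 2" by arith
  then show "coeff (reflect_poly Bp) n = coeff (- Bp) n"
    by (auto simp: coeff_reflect_poly degree_Bp) (auto simp: Bp_def coeff_pCons coeff_eq_0 split: nat.split)
qed

lemma reflect_Qp: "reflect_poly (Qp L i) = (-1)^i * Qp L i"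
  unfolding Qp_def reflect_poly_mult reflect_poly_power reflect_Ap reflect_Bp
  by (simp add: power_minus' mult_ac)

lemma Lam_Qp_odd:
  assumes "odd i" "i \<le> L"
  shows "LamG abs L (Qp L i) = 0"
proof -
  have c: "coeff (Qp L i) (2*L - x) = - coeff (Qp L i) x" if "x \<le> 2*L" for x
  proof -
    have "coeff (reflect_poly (Qp L i)) x = coeff (Qp L i) (2*L - x)"
      using that by (simp add: coeff_reflect_poly degree_Qp[OF assms(2)])
    also have "coeff (reflect_poly (Qp L i)) x = - coeff (Qp L i) x"
      using assms(1) by (simp add: reflect_Qp)
    finally show ?thesis by simp
  qed
  have "LamG abs L (Qp L i) = (\<Sum>x\<le>2*L. \<bar>real (2*L - x) - real L\<bar> * coeff (Qp L i) (2*L - x))"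
    unfolding LamG_def by (rule sum_rev_atMost)
  also have "\<dots> = (\<Sum>x\<le>2*L. - (\<bar>real x - real L\<bar> * coeff (Qp L i) x))"
    by (rule sum.cong) (auto simp: c of_nat_diff)
  also have "\<dots> = - LamG abs L (Qp L i)"
    by (simp add: LamG_def sum_negf)
  finally show ?thesis by simp
qed

lemma Sq_Qp:
  "2*k \<le> L \<Longrightarrow> LamG (\<lambda>t. t^2) L (Qp L (2*k)) = (if k = 0 then real L * 2^L else if k = 1 then 2^(L+1) else 0)"
proof (induction k arbitrary: L)
  case 0
  then show ?case by (simp add: Qp_def Sq_base)
next
  case (Suc k)
  define L' where "L' = L - 2"
  have L: "L = L' + 2" and k: "2*k \<le> L'" using Suc.prems by (auto simp: L'_def)
  have "LamG (\<lambda>t. t^2) L (Qp L (2*Suc k)) = LamG (\<lambda>t. t^2) (L'+2) (Qp (L'+2) (2*k+2))"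
    using L by simp
  also have "\<dots> = LamG (\<lambda>t. t^2) (L'+2) (Qp (L'+2) (2*k)) - 4 * LamG (\<lambda>t. t^2) L' (Qp L' (2*k))"
    by (rule LamG_rec) (use k in simp)
  also have "\<dots> = (if Suc k = 0 then real L * 2^L else if Suc k = 1 then 2^(L+1) else 0)"
  proof -
    have i1: "LamG (\<lambda>t. t^2) (L'+2) (Qp (L'+2) (2*k)) = (if k = 0 then real (L'+2) * 2^(L'+2) else if k = 1 then 2^(L'+2+1) else 0)"
      using Suc.IH[of "L'+2"] k by simp
    have i2: "LamG (\<lambda>t. t^2) L' (Qp L' (2*k)) = (if k = 0 then real L' * 2^L' else if k = 1 then 2^(L'+1) else 0)"
      using Suc.IH[of L'] k by simp
    show ?thesis unfolding i1 i2 L by (simp add: algebra_simps power_add)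
  qed
  finally show ?case .
qed

lemma uniq2:
  assumes eq: "\<forall>z w::real. (\<Sum>x\<le>D. \<Sum>y\<le>D. c x y * z^x * w^y) = (\<Sum>x\<le>D. \<Sum>y\<le>D. d x y * z^x * w^y)"
  assumes "x \<le> D" "y \<le> D"
  shows "c x y = d x y"
proof -
  have r: "(\<Sum>x\<le>D. \<Sum>y\<le>D. e x y * z^x * w^y) = (\<Sum>x\<le>D. (\<Sum>y\<le>D. e x y * w^y) * z^x)" for e and z w :: real
    by (simp add: sum_distrib_right sum_distrib_left mult_ac)
  have h1: "\<forall>x\<le>D. (\<Sum>y\<le>D. c x y * w^y) = (\<Sum>y\<le>D. d x y * w^y)" for w :: real
  proof -
    have "\<forall>z. (\<Sum>x\<le>D. (\<Sum>y\<le>D. c x y * w^y) * z^x) = (\<Sum>x\<le>D. (\<Sum>y\<le>D. d x y * w^y) * z^x)"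
      using eq by (simp add: r[symmetric])
    then show ?thesis by (subst (asm) polyfun_eq_coeffs)
  qed
  have "\<forall>w::real. (\<Sum>y\<le>D. c x y * w^y) = (\<Sum>y\<le>D. d x y * w^y)"
    using h1 assms(2) by blast
  then show ?thesis using assms(3) by (subst (asm) polyfun_eq_coeffs) blast
qed

lemma delta2:
  assumes fin: "finite T" and bd: "\<And>t. t \<in> T \<Longrightarrow> \<alpha> t \<le> (D::nat) \<and> \<beta> t \<le> D"
  shows "(\<Sum>x\<le>D. \<Sum>y\<le>D. (\<Sum>t\<in>T. if \<alpha> t = x \<and> \<beta> t = y then g t else 0) * F x y)
         = (\<Sum>t\<in>T. (g t :: real) * F (\<alpha> t) (\<beta> t))"
proof -
  have "(\<Sum>x\<le>D. \<Sum>y\<le>D. (\<Sum>t\<in>T. if \<alpha> t = x \<and> \<beta> t = y then g t else 0) * F x y)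
      = (\<Sum>x\<le>D. \<Sum>y\<le>D. \<Sum>t\<in>T. if \<alpha> t = x \<and> \<beta> t = y then g t * F x y else 0)"
    unfolding sum_distrib_right by (intro sum.cong refl) simp
  also have "\<dots> = (\<Sum>x\<le>D. \<Sum>t\<in>T. \<Sum>y\<le>D. if \<alpha> t = x \<and> \<beta> t = y then g t * F x y else 0)"
    by (subst sum.swap) (rule refl)
  also have "\<dots> = (\<Sum>t\<in>T. \<Sum>x\<le>D. \<Sum>y\<le>D. if \<alpha> t = x \<and> \<beta> t = y then g t * F x y else 0)"
    by (rule sum.swap)
  also have "\<dots> = (\<Sum>t\<in>T. g t * F (\<alpha> t) (\<beta> t))"
  proof (rule sum.cong[OF refl])
    fix t assume t: "t \<in> T"
    have "(\<Sum>x\<le>D. \<Sum>y\<le>D. if \<alpha> t = x \<and> \<beta> t = y then g t * F x y else 0)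
        = (\<Sum>x\<le>D. if \<alpha> t = x then g t * F x (\<beta> t) else 0)"
    proof (rule sum.cong[OF refl])
      fix x assume "x \<in> {..D}"
      show "(\<Sum>y\<le>D. if \<alpha> t = x \<and> \<beta> t = y then g t * F x y else 0) = (if \<alpha> t = x then g t * F x (\<beta> t) else 0)"
      proof (cases "\<alpha> t = x")
        case True then show ?thesis using bd[OF t]
          apply (simp only: True simp_thms if_True)
          apply (subst sum.delta')
          apply auto
          done
      qed simp
    qed
    also have "\<dots> = g t * F (\<alpha> t) (\<beta> t)"
      using bd[OF t] by (simp add: sum.delta sum.delta')
    finally show "(\<Sum>x\<le>D. \<Sum>y\<le>D. if \<alpha> t = x \<and> \<beta> t = y then g t * F x y else 0) = g t * F (\<alpha> t) (\<beta> t)" .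
  qed
  finally show ?thesis .
qed

lemma transfer2:
  assumes fin: "finite T" and bd: "\<And>t. t \<in> T \<Longrightarrow> \<alpha> t \<le> (D::nat) \<and> \<beta> t \<le> D"
    and eq: "\<forall>z w::real. (\<Sum>x\<le>D. \<Sum>y\<le>D. c x y * z^x * w^y) = (\<Sum>t\<in>T. g t * z^(\<alpha> t) * w^(\<beta> t))"
  shows "(\<Sum>x\<le>D. \<Sum>y\<le>D. \<phi> x * \<psi> y * c x y) = (\<Sum>t\<in>T. g t * \<phi> (\<alpha> t) * \<psi> (\<beta> t))"
proof -
  define d where "d x y = (\<Sum>t\<in>T. if \<alpha> t = x \<and> \<beta> t = y then g t else 0)" for x y
  have "\<forall>z w::real. (\<Sum>x\<le>D. \<Sum>y\<le>D. c x y * z^x * w^y) = (\<Sum>x\<le>D. \<Sum>y\<le>D. d x y * z^x * w^y)"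
  proof (intro allI)
    fix z w :: real
    have "(\<Sum>x\<le>D. \<Sum>y\<le>D. d x y * z^x * w^y) = (\<Sum>x\<le>D. \<Sum>y\<le>D. d x y * (z^x * w^y))"
      by (simp add: mult.assoc)
    also have "\<dots> = (\<Sum>t\<in>T. g t * (z^(\<alpha> t) * w^(\<beta> t)))"
      unfolding d_def by (rule delta2[OF fin bd])
    finally show "(\<Sum>x\<le>D. \<Sum>y\<le>D. c x y * z^x * w^y) = (\<Sum>x\<le>D. \<Sum>y\<le>D. d x y * z^x * w^y)"
      using eq by (simp add: mult.assoc)
  qed
  then have cd: "x \<le> D \<Longrightarrow> y \<le> D \<Longrightarrow> c x y = d x y" for x y by (rule uniq2)
  have "(\<Sum>x\<le>D. \<Sum>y\<le>D. \<phi> x * \<psi> y * c x y) = (\<Sum>x\<le>D. \<Sum>y\<le>D. d x y * (\<phi> x * \<psi> y))"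
    by (intro sum.cong refl) (simp add: cd mult_ac)
  also have "\<dots> = (\<Sum>t\<in>T. g t * (\<phi> (\<alpha> t) * \<psi> (\<beta> t)))"
    unfolding d_def by (rule delta2[OF fin bd])
  finally show ?thesis by (simp add: mult.assoc)
qed

lemma poly_D: "degree p \<le> D \<Longrightarrow> poly p (z::real) = (\<Sum>x\<le>D. coeff p x * z^x)"
  unfolding poly_altdef
  by (rule sum.mono_neutral_left) (auto simp: coeff_eq_0)

lemma sum4_swap:
  "(\<Sum>x\<in>A. \<Sum>y\<in>B. \<Sum>r\<in>C. \<Sum>s\<in>D. (f x y r s :: real)) = (\<Sum>r\<in>C. \<Sum>s\<in>D. \<Sum>x\<in>A. \<Sum>y\<in>B. f x y r s)"
proof -
  have "(\<Sum>x\<in>A. \<Sum>y\<in>B. \<Sum>r\<in>C. \<Sum>s\<in>D. f x y r s) = (\<Sum>x\<in>A. \<Sum>r\<in>C. \<Sum>y\<in>B. \<Sum>s\<in>D. f x y r s)"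
    by (rule sum.cong[OF refl], rule sum.swap)
  also have "\<dots> = (\<Sum>r\<in>C. \<Sum>x\<in>A. \<Sum>y\<in>B. \<Sum>s\<in>D. f x y r s)"
    by (rule sum.swap)
  also have "\<dots> = (\<Sum>r\<in>C. \<Sum>x\<in>A. \<Sum>s\<in>D. \<Sum>y\<in>B. f x y r s)"
    by (intro sum.cong refl, rule sum.swap)
  also have "\<dots> = (\<Sum>r\<in>C. \<Sum>s\<in>D. \<Sum>x\<in>A. \<Sum>y\<in>B. f x y r s)"
    by (rule sum.cong[OF refl], rule sum.swap)
  finally show ?thesis .
qed

lemma prodsum: "(\<Sum>x\<in>X. \<Sum>y\<in>Y. (a::real) * (f x * g y)) = a * (sum f X * sum g Y)"
  by (subst sum_product) (simp add: sum_distrib_left)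

lemma coeff_expand2:
  assumes "\<And>r s. r \<in> C \<Longrightarrow> s \<in> E \<Longrightarrow> degree (P r s) \<le> D \<and> degree (R r s) \<le> D"
  shows "(\<Sum>x\<le>D. \<Sum>y\<le>D. (\<Sum>r\<in>C. \<Sum>s\<in>E. a r s * coeff (P r s) x * coeff (R r s) y) * z^x * w^y)
       = (\<Sum>r\<in>C. \<Sum>s\<in>E. a r s * (poly (P r s) z * poly (R r s) (w::real)))"
proof -
  have "(\<Sum>x\<le>D. \<Sum>y\<le>D. (\<Sum>r\<in>C. \<Sum>s\<in>E. a r s * coeff (P r s) x * coeff (R r s) y) * z^x * w^y)
      = (\<Sum>x\<le>D. \<Sum>y\<le>D. \<Sum>r\<in>C. \<Sum>s\<in>E. a r s * ((coeff (P r s) x * z^x) * (coeff (R r s) y * w^y)))"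
    by (simp add: sum_distrib_right sum_distrib_left mult_ac)
  also have "\<dots> = (\<Sum>r\<in>C. \<Sum>s\<in>E. \<Sum>x\<le>D. \<Sum>y\<le>D. a r s * ((coeff (P r s) x * z^x) * (coeff (R r s) y * w^y)))"
    by (rule sum4_swap)
  also have "\<dots> = (\<Sum>r\<in>C. \<Sum>s\<in>E. a r s * ((\<Sum>x\<le>D. coeff (P r s) x * z^x) * (\<Sum>y\<le>D. coeff (R r s) y * w^y)))"
    by (intro sum.cong refl) (rule prodsum)
  also have "\<dots> = (\<Sum>r\<in>C. \<Sum>s\<in>E. a r s * (poly (P r s) z * poly (R r s) w))"
  proof (intro sum.cong refl)
    fix r s assume "r \<in> C" "s \<in> E"
    then have d: "degree (P r s) \<le> D" "degree (R r s) \<le> D" using assms by auto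
    show "a r s * ((\<Sum>x\<le>D. coeff (P r s) x * z^x) * (\<Sum>y\<le>D. coeff (R r s) y * w^y)) = a r s * (poly (P r s) z * poly (R r s) w)"
      by (simp add: poly_D[OF d(1)] poly_D[OF d(2)])
  qed
  finally show ?thesis .
qed

lemma lam_expand2:
  "(\<Sum>x\<le>2*c. \<Sum>y\<le>2*c. \<bar>real x - real c\<bar> * \<bar>real y - real c\<bar> * (\<Sum>r\<in>C. \<Sum>s\<in>E. a r s * coeff (P r s) x * coeff (R r s) y))
   = (\<Sum>r\<in>C. \<Sum>s\<in>E. a r s * (LamG abs c (P r s) * LamG abs c (R r s)))"
proof -
  have "(\<Sum>x\<le>2*c. \<Sum>y\<le>2*c. \<bar>real x - real c\<bar> * \<bar>real y - real c\<bar> * (\<Sum>r\<in>C. \<Sum>s\<in>E. a r s * coeff (P r s) x * coeff (R r s) y))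
      = (\<Sum>x\<le>2*c. \<Sum>y\<le>2*c. \<Sum>r\<in>C. \<Sum>s\<in>E. a r s * ((\<bar>real x - real c\<bar> * coeff (P r s) x) * (\<bar>real y - real c\<bar> * coeff (R r s) y)))"
    by (simp add: sum_distrib_left mult_ac)
  also have "\<dots> = (\<Sum>r\<in>C. \<Sum>s\<in>E. \<Sum>x\<le>2*c. \<Sum>y\<le>2*c. a r s * ((\<bar>real x - real c\<bar> * coeff (P r s) x) * (\<bar>real y - real c\<bar> * coeff (R r s) y)))"
    by (rule sum4_swap)
  also have "\<dots> = (\<Sum>r\<in>C. \<Sum>s\<in>E. a r s * (LamG abs c (P r s) * LamG abs c (R r s)))"
    unfolding LamG_def by (intro sum.cong refl) (rule prodsum)
  finally show ?thesis .
qed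

lemma term_H:
  fixes S U V W :: real
  assumes "r \<le> M" "s \<le> K"
  shows "(U*V)^r * (S*W)^(M-r) * ((U*W)^s * (S*V)^(K-s))
       = (S^(M+K-(r+s)) * U^(r+s)) * (W^(M+K-(r+K-s)) * V^(r+K-s))"
proof -
  have e1: "M+K-(r+s) = (M-r)+(K-s)" and e2: "M+K-(r+(K-s)) = (M-r)+s" and e3: "r+K-s = r+(K-s)"
    using assms by auto
  show ?thesis unfolding e3 unfolding e1 e2 by (simp add: power_add power_mult_distrib mult_ac)
qed

lemma pow2split: "(2*(A::real))^M * (2*B)^K = 2^(M+K) * (A^M * B^K)"
  by (simp add: power_mult_distrib power_add mult_ac)

lemma biv_fun_H:
  assumes "k \<le> q"
  shows "(\<Sum>r\<le>2*q-2*k. \<Sum>s\<le>2*k. real ((2*q-2*k) choose r) * real ((2*k) choose s) *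
            (poly (Qp (2*q) (r+s)) z * poly (Qp (2*q) (r+2*k-s)) w))
         = 2^(2*q) * poly (Qp (2*q) (2*k)) (z*w)"
proof -
  define M where "M = 2*q-2*k"
  define K where "K = 2*k"
  have NMK: "2*q = M + K" using assms by (simp add: M_def K_def)
  define S where "S = 1 + z^2"
  define U where "U = z^2 - 1"
  define W where "W = 1 + w^2"
  define V where "V = w^2 - 1"
  have a1: "2 * (1 + (z*w)^2) = U*V + S*W" by (simp add: S_def U_def V_def W_def algebra_simps power_mult_distrib)
  have a2: "2 * ((z*w)^2 - 1) = U*W + S*V" by (simp add: S_def U_def V_def W_def algebra_simps power_mult_distrib)
  have "2^(2*q) * poly (Qp (2*q) (2*k)) (z*w) = 2^(M+K) * poly (Qp (M+K) K) (z*w)"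
    by (simp add: NMK K_def)
  also have "\<dots> = (2 * (1 + (z*w)^2))^M * (2 * ((z*w)^2 - 1))^K"
    unfolding poly_Qp pow2split by simp
  also have "\<dots> = (U*V + S*W)^M * (U*W + S*V)^K" by (simp only: a1 a2)
  also have "\<dots> = (\<Sum>r\<le>M. real (M choose r) * (U*V)^r * (S*W)^(M-r)) * (\<Sum>s\<le>K. real (K choose s) * (U*W)^s * (S*V)^(K-s))"
    by (simp only: binomial_ring)
  also have "\<dots> = (\<Sum>r\<le>M. \<Sum>s\<le>K. real (M choose r) * real (K choose s) * ((U*V)^r * (S*W)^(M-r) * ((U*W)^s * (S*V)^(K-s))))"
    unfolding sum_product by (intro sum.cong refl) (simp add: mult_ac)
  also have "\<dots> = (\<Sum>r\<le>M. \<Sum>s\<le>K. real (M choose r) * real (K choose s) *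
            (poly (Qp (2*q) (r+s)) z * poly (Qp (2*q) (r+K-s)) w))"
    by (intro sum.cong refl) (simp add: term_H poly_Qp NMK S_def U_def V_def W_def)
  finally show ?thesis by (simp add: M_def K_def)
qed

lemma absabs: "(2^n * g) * \<bar>u\<bar> * \<bar>u\<bar> = 2^n * (u^2 * (g::real))"
proof -
  have "\<bar>u\<bar> * \<bar>u\<bar> = u^2" by (simp add: power2_eq_square abs_mult_self_eq)
  then show ?thesis by (metis mult.assoc mult.commute)
qed

lemma core_H:
  assumes kq: "k \<le> q"
  shows "(\<Sum>r\<le>2*q-2*k. \<Sum>s\<le>2*k. real ((2*q-2*k) choose r) * real ((2*k) choose s) *
            (LamG abs (2*q) (Qp (2*q) (r+s)) * LamG abs (2*q) (Qp (2*q) (r+2*k-s))))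
         = 2^(2*q) * LamG (\<lambda>t. t^2) (2*q) (Qp (2*q) (2*k))"
proof -
  define a where "a r s = real ((2*q-2*k) choose r) * real ((2*k) choose s)" for r s
  define BC where "BC x y = (\<Sum>r\<in>{..2*q-2*k}. \<Sum>s\<in>{..2*k}. a r s * coeff (Qp (2*q) (r+s)) x * coeff (Qp (2*q) (r+2*k-s)) y)" for x y
  have deg: "degree (Qp (2*q) (r+s)) \<le> 2*(2*q) \<and> degree (Qp (2*q) (r+2*k-s)) \<le> 2*(2*q)"
    if "r \<in> {..2*q-2*k}" "s \<in> {..2*k}" for r s
    using that kq by (intro conjI degree_Qp_le) auto
  have degk: "degree (Qp (2*q) (2*k)) \<le> 2*(2*q)" using kq by (intro degree_Qp_le) auto
  have eq: "\<forall>z w::real. (\<Sum>x\<le>2*(2*q). \<Sum>y\<le>2*(2*q). BC x y * z^x * w^y)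
            = (\<Sum>t\<in>{..2*(2*q)}. (2^(2*q) * coeff (Qp (2*q) (2*k)) t) * z^(id t) * w^(id t))"
  proof (intro allI)
    fix z w :: real
    have "(\<Sum>x\<le>2*(2*q). \<Sum>y\<le>2*(2*q). BC x y * z^x * w^y)
          = (\<Sum>r\<in>{..2*q-2*k}. \<Sum>s\<in>{..2*k}. a r s * (poly (Qp (2*q) (r+s)) z * poly (Qp (2*q) (r+2*k-s)) w))"
      unfolding BC_def by (rule coeff_expand2) (rule deg)
    also have "\<dots> = 2^(2*q) * poly (Qp (2*q) (2*k)) (z*w)"
      unfolding a_def using biv_fun_H[OF kq] by simp
    also have "\<dots> = (\<Sum>t\<in>{..2*(2*q)}. (2^(2*q) * coeff (Qp (2*q) (2*k)) t) * z^(id t) * w^(id t))"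
      unfolding poly_D[OF degk] by (simp add: sum_distrib_left power_mult_distrib mult_ac)
    finally show "(\<Sum>x\<le>2*(2*q). \<Sum>y\<le>2*(2*q). BC x y * z^x * w^y)
            = (\<Sum>t\<in>{..2*(2*q)}. (2^(2*q) * coeff (Qp (2*q) (2*k)) t) * z^(id t) * w^(id t))" .
  qed
  have "(\<Sum>x\<le>2*(2*q). \<Sum>y\<le>2*(2*q). \<bar>real x - real (2*q)\<bar> * \<bar>real y - real (2*q)\<bar> * BC x y)
        = (\<Sum>t\<in>{..2*(2*q)}. (2^(2*q) * coeff (Qp (2*q) (2*k)) t) * \<bar>real (id t) - real (2*q)\<bar> * \<bar>real (id t) - real (2*q)\<bar>)"
    by (rule transfer2[OF _ _ eq]) auto
  also have "\<dots> = 2^(2*q) * LamG (\<lambda>t. t^2) (2*q) (Qp (2*q) (2*k))"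
    unfolding LamG_def sum_distrib_left
    by (intro sum.cong refl) (simp add: absabs)
  finally have 1: "(\<Sum>x\<le>2*(2*q). \<Sum>y\<le>2*(2*q). \<bar>real x - real (2*q)\<bar> * \<bar>real y - real (2*q)\<bar> * BC x y)
      = 2^(2*q) * LamG (\<lambda>t. t^2) (2*q) (Qp (2*q) (2*k))" .
  have 2: "(\<Sum>x\<le>2*(2*q). \<Sum>y\<le>2*(2*q). \<bar>real x - real (2*q)\<bar> * \<bar>real y - real (2*q)\<bar> * BC x y)
      = (\<Sum>r\<in>{..2*q-2*k}. \<Sum>s\<in>{..2*k}. a r s * (LamG abs (2*q) (Qp (2*q) (r+s)) * LamG abs (2*q) (Qp (2*q) (r+2*k-s))))"
    unfolding BC_def by (rule lam_expand2)
  show ?thesis using 1 2 by (simp add: a_def)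
qed

lemma term_H2:
  fixes S U V W :: real
  assumes "r \<le> M" "s \<le> K"
  shows "S * W * ((U*V)^r * (S*W)^(M-r) * ((U*W)^s * (S*V)^(K-s)))
       = (S^(M+K+1-(r+s)) * U^(r+s)) * (W^(M+K+1-(r+K-s)) * V^(r+K-s))"
proof -
  have e1: "M+K+1-(r+s) = Suc ((M-r)+(K-s))" and e2: "M+K+1-(r+(K-s)) = Suc ((M-r)+s)" and e3: "r+K-s = r+(K-s)"
    using assms by auto
  show ?thesis unfolding e3 unfolding e1 e2 by (simp add: power_add power_mult_distrib mult_ac)
qed

lemma biv_fun_H2:
  assumes "k < q"
  shows "(\<Sum>r\<le>2*q-2*k-1. \<Sum>s\<le>2*k. real ((2*q-2*k-1) choose r) * real ((2*k) choose s) *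
            (poly (Qp (2*q) (r+s)) z * poly (Qp (2*q) (r+2*k-s)) w))
         = 2^(2*q-1) * ((1+z^2)*(1+w^2)) * poly (Qp (2*q-1) (2*k)) (z*w)"
proof -
  define M where "M = 2*q-2*k-1"
  define K where "K = 2*k"
  have NMK: "2*q = M + K + 1" and NMK1: "2*q-1 = M+K" using assms by (simp_all add: M_def K_def)
  define S where "S = 1 + z^2"
  define U where "U = z^2 - 1"
  define W where "W = 1 + w^2"
  define V where "V = w^2 - 1"
  have a1: "2 * (1 + (z*w)^2) = U*V + S*W" by (simp add: S_def U_def V_def W_def algebra_simps power_mult_distrib)
  have a2: "2 * ((z*w)^2 - 1) = U*W + S*V" by (simp add: S_def U_def V_def W_def algebra_simps power_mult_distrib)
  have "2^(2*q-1) * ((1+z^2)*(1+w^2)) * poly (Qp (2*q-1) (2*k)) (z*w) = S * W * (2^(M+K) * poly (Qp (M+K) K) (z*w))"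
    unfolding NMK1 S_def W_def K_def by (simp add: mult_ac)
  also have "2^(M+K) * poly (Qp (M+K) K) (z*w) = (2 * (1 + (z*w)^2))^M * (2 * ((z*w)^2 - 1))^K"
    unfolding poly_Qp pow2split by simp
  also have "\<dots> = (U*V + S*W)^M * (U*W + S*V)^K" by (simp only: a1 a2)
  also have "\<dots> = (\<Sum>r\<le>M. real (M choose r) * (U*V)^r * (S*W)^(M-r)) * (\<Sum>s\<le>K. real (K choose s) * (U*W)^s * (S*V)^(K-s))"
    by (simp only: binomial_ring)
  also have "\<dots> = (\<Sum>r\<le>M. \<Sum>s\<le>K. real (M choose r) * real (K choose s) * ((U*V)^r * (S*W)^(M-r) * ((U*W)^s * (S*V)^(K-s))))"
    unfolding sum_product by (intro sum.cong refl) (simp add: mult_ac)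
  also have "S * W * \<dots> = (\<Sum>r\<le>M. \<Sum>s\<le>K. real (M choose r) * real (K choose s) * (S * W * ((U*V)^r * (S*W)^(M-r) * ((U*W)^s * (S*V)^(K-s)))))"
    by (simp add: sum_distrib_left mult_ac)
  also have "\<dots> = (\<Sum>r\<le>M. \<Sum>s\<le>K. real (M choose r) * real (K choose s) *
            (poly (Qp (2*q) (r+s)) z * poly (Qp (2*q) (r+K-s)) w))"
    by (intro sum.cong refl) (simp add: term_H2 poly_Qp NMK S_def U_def V_def W_def)
  finally show ?thesis by (simp add: M_def K_def)
qed

lemma abs_pair2:
  assumes "even t" "even (N::nat)" "N \<noteq> 0"
  shows "(\<bar>real t - real N\<bar> + \<bar>real t + 2 - real N\<bar>)^2 = 4 * (real t - real (N - 1))^2"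
proof (cases "t < N")
  case True
  then have "t + 2 \<le> N" using assms by (metis add_2_eq_Suc' even_Suc le_eq_less_or_eq less_Suc_eq_le not_less_eq)
  then have "real t + 2 \<le> real N" by linarith
  moreover have "real (N - 1) = real N - 1" using True by simp
  ultimately show ?thesis using True by (simp add: power2_eq_square algebra_simps)
next
  case False
  then have "real N \<le> real t" by simp
  moreover have "real (N - 1) = real N - 1" using assms(3) by simp
  ultimately show ?thesis using False by (simp add: power2_eq_square algebra_simps)
qed

lemma sum_T3:
  "(\<Sum>\<tau>\<in>A \<times> ({..<2::nat} \<times> {..<2::nat}). (case \<tau> of (t,e,f) \<Rightarrow> (h t e f :: real)))
   = (\<Sum>t\<in>A. h t 0 0 + h t 0 1 + h t 1 0 + h t 1 1)"
proof -
  have "(\<Sum>\<tau>\<in>A \<times> ({..<2::nat} \<times> {..<2::nat}). (case \<tau> of (t,e,f) \<Rightarrow> h t e f))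
      = (\<Sum>t\<in>A. \<Sum>\<sigma>\<in>{..<2::nat} \<times> {..<2::nat}. (case \<sigma> of (e,f) \<Rightarrow> h t e f))"
    by (subst sum.cartesian_product) (simp add: case_prod_beta)
  also have "\<dots> = (\<Sum>t\<in>A. \<Sum>e<2. \<Sum>f<2. h t e f)"
    by (subst sum.cartesian_product) (simp add: case_prod_beta)
  also have "\<dots> = (\<Sum>t\<in>A. h t 0 0 + h t 0 1 + h t 1 0 + h t 1 1)"
    by (simp add: numeral_2_eq_2 lessThan_Suc add_ac)
  finally show ?thesis .
qed

lemma core_H2:
  assumes kq: "k < q"
  shows "(\<Sum>r\<le>2*q-2*k-1. \<Sum>s\<le>2*k. real ((2*q-2*k-1) choose r) * real ((2*k) choose s) *
            (LamG abs (2*q) (Qp (2*q) (r+s)) * LamG abs (2*q) (Qp (2*q) (r+2*k-s))))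
         = 2^(2*q+1) * LamG (\<lambda>t. t^2) (2*q-1) (Qp (2*q-1) (2*k))"
proof -
  define N where "N = 2*q"
  define c where "c t = coeff (Qp (2*q-1) (2*k)) t" for t
  define a where "a r s = real ((2*q-2*k-1) choose r) * real ((2*k) choose s)" for r s
  define BC where "BC x y = (\<Sum>r\<in>{..2*q-2*k-1}. \<Sum>s\<in>{..2*k}. a r s * coeff (Qp (2*q) (r+s)) x * coeff (Qp (2*q) (r+2*k-s)) y)" for x y
  define T where "T = {..2*(2*q-1)} \<times> ({..<2::nat} \<times> {..<2::nat})"
  define g where "g = (\<lambda>(t::nat,e::nat,f::nat). 2^(2*q-1) * c t)"
  define \<alpha> where "\<alpha> = (\<lambda>(t::nat,e::nat,f::nat). t + 2*e)"
  define \<beta> where "\<beta> = (\<lambda>(t::nat,e::nat,f::nat). t + 2*f)"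
  have deg: "degree (Qp (2*q) (r+s)) \<le> 2*(2*q) \<and> degree (Qp (2*q) (r+2*k-s)) \<le> 2*(2*q)"
    if "r \<in> {..2*q-2*k-1}" "s \<in> {..2*k}" for r s
    using that kq by (intro conjI degree_Qp_le) auto
  have degk: "degree (Qp (2*q-1) (2*k)) \<le> 2*(2*q-1)" using kq by (intro degree_Qp_le) auto
  have finT: "finite T" by (simp add: T_def)
  have bdT: "\<alpha> \<tau> \<le> 2*(2*q) \<and> \<beta> \<tau> \<le> 2*(2*q)" if "\<tau> \<in> T" for \<tau>
    using that kq by (auto simp: T_def \<alpha>_def \<beta>_def)
  have eq: "\<forall>z w::real. (\<Sum>x\<le>2*(2*q). \<Sum>y\<le>2*(2*q). BC x y * z^x * w^y)
            = (\<Sum>\<tau>\<in>T. g \<tau> * z^(\<alpha> \<tau>) * w^(\<beta> \<tau>))"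
  proof (intro allI)
    fix z w :: real
    have "(\<Sum>x\<le>2*(2*q). \<Sum>y\<le>2*(2*q). BC x y * z^x * w^y)
          = (\<Sum>r\<in>{..2*q-2*k-1}. \<Sum>s\<in>{..2*k}. a r s * (poly (Qp (2*q) (r+s)) z * poly (Qp (2*q) (r+2*k-s)) w))"
      unfolding BC_def by (rule coeff_expand2) (rule deg)
    also have "\<dots> = 2^(2*q-1) * ((1+z^2)*(1+w^2)) * poly (Qp (2*q-1) (2*k)) (z*w)"
      unfolding a_def using biv_fun_H2[OF kq] by simp
    also have "\<dots> = (\<Sum>t\<in>{..2*(2*q-1)}. 2^(2*q-1) * c t * (z^t * w^t + z^t * w^(t+2) + z^(t+2) * w^t + z^(t+2) * w^(t+2)))"
      unfolding poly_D[OF degk] c_def sum_distrib_left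
      by (intro sum.cong refl) (simp add: power_add power_mult_distrib power2_eq_square algebra_simps)
    also have "\<dots> = (\<Sum>\<tau>\<in>T. g \<tau> * z^(\<alpha> \<tau>) * w^(\<beta> \<tau>))"
    proof -
      have "(\<Sum>\<tau>\<in>T. g \<tau> * z^(\<alpha> \<tau>) * w^(\<beta> \<tau>)) = (\<Sum>\<tau>\<in>T. (case \<tau> of (t,e,f) \<Rightarrow> 2^(2*q-1) * c t * z^(t+2*e) * w^(t+2*f)))"
        by (intro sum.cong refl) (auto simp: g_def \<alpha>_def \<beta>_def)
      also have "\<dots> = (\<Sum>t\<in>{..2*(2*q-1)}. 2^(2*q-1) * c t * (z^t * w^t + z^t * w^(t+2) + z^(t+2) * w^t + z^(t+2) * w^(t+2)))"
        unfolding T_def sum_T3 by (simp add: algebra_simps)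
      finally show ?thesis by simp
    qed
    finally show "(\<Sum>x\<le>2*(2*q). \<Sum>y\<le>2*(2*q). BC x y * z^x * w^y) = (\<Sum>\<tau>\<in>T. g \<tau> * z^(\<alpha> \<tau>) * w^(\<beta> \<tau>))" .
  qed
  define \<phi> where "\<phi> x = \<bar>real x - real (2*q)\<bar>" for x :: nat
  have "(\<Sum>x\<le>2*(2*q). \<Sum>y\<le>2*(2*q). \<phi> x * \<phi> y * BC x y) = (\<Sum>\<tau>\<in>T. g \<tau> * \<phi> (\<alpha> \<tau>) * \<phi> (\<beta> \<tau>))"
    by (rule transfer2[OF finT bdT eq])
  also have "\<dots> = (\<Sum>\<tau>\<in>T. (case \<tau> of (t,e,f) \<Rightarrow> 2^(2*q-1) * c t * \<phi> (t+2*e) * \<phi> (t+2*f)))"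
    by (intro sum.cong refl) (auto simp: g_def \<alpha>_def \<beta>_def)
  also have "\<dots> = (\<Sum>t\<le>2*(2*q-1). 2^(2*q-1) * c t * (\<phi> t + \<phi> (t+2))^2)"
    unfolding T_def sum_T3 by (intro sum.cong refl) (simp add: power2_eq_square algebra_simps)
  also have "\<dots> = (\<Sum>t\<le>2*(2*q-1). 2^(2*q+1) * ((real t - real (2*q-1))^2 * c t))"
  proof (intro sum.cong refl)
    fix t
    show "2^(2*q-1) * c t * (\<phi> t + \<phi> (t+2))^2 = 2^(2*q+1) * ((real t - real (2*q-1))^2 * c t)"
    proof (cases "even t")
      case True
      have "(\<phi> t + \<phi> (t+2))^2 = 4 * (real t - real (2*q-1))^2"
        unfolding \<phi>_def using abs_pair2[OF True, of "2*q"] kq by (simp add: add.commute)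
      moreover have "(2::real)^(2*q+1) = 2^(2*q-1) * 4"
      proof -
        have "2*q+1 = (2*q-1) + 2" using kq by simp
        then show ?thesis by (simp only: power_add) simp
      qed
      ultimately show ?thesis by simp
    next
      case False
      then have "c t = 0" using evenp_Qp unfolding c_def evenp_def by blast
      then show ?thesis by simp
    qed
  qed
  also have "\<dots> = 2^(2*q+1) * LamG (\<lambda>t. t^2) (2*q-1) (Qp (2*q-1) (2*k))"
    by (simp add: LamG_def sum_distrib_left c_def)
  finally have 1: "(\<Sum>x\<le>2*(2*q). \<Sum>y\<le>2*(2*q). \<phi> x * \<phi> y * BC x y) = 2^(2*q+1) * LamG (\<lambda>t. t^2) (2*q-1) (Qp (2*q-1) (2*k))" .
  have 2: "(\<Sum>x\<le>2*(2*q). \<Sum>y\<le>2*(2*q). \<phi> x * \<phi> y * BC x y)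
      = (\<Sum>r\<in>{..2*q-2*k-1}. \<Sum>s\<in>{..2*k}. a r s * (LamG abs (2*q) (Qp (2*q) (r+s)) * LamG abs (2*q) (Qp (2*q) (r+2*k-s))))"
    unfolding BC_def \<phi>_def by (rule lam_expand2)
  show ?thesis using 1 2 by (simp add: a_def)
qed

lemma inv_fact_G_eq: "inv_fact_G x = (if 0 \<le> x then inverse (fact (nat x)) else 0)"
proof -
  have "inv_fact_G x = rGamma (of_int (x + 1))" by (simp add: inv_fact_G_def)
  also have "\<dots> = (if x + 1 > 0 then inverse (fact (nat (x + 1 - 1))) else 0)"
    by (rule rGamma_of_int)
  finally show ?thesis by auto
qed

lemma inv_fact_G_nat: "inv_fact_G (int a) = inverse (fact a)"
  by (simp add: inv_fact_G_eq)

lemma half_not_nonpos_Int: "(-1/2::real) \<notin> \<int>\<^sub>\<le>\<^sub>0" "(1/2::real) \<notin> \<int>\<^sub>\<le>\<^sub>0"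
proof -
  show "(-1/2::real) \<notin> \<int>\<^sub>\<le>\<^sub>0"
  proof
    assume "(-1/2::real) \<in> \<int>\<^sub>\<le>\<^sub>0"
    then obtain n where "(-1/2::real) = - of_nat n" by (rule nonpos_Ints_cases')
    then have "real (2*n) = 1" by simp
    then have "2*n = 1" by (simp only: of_nat_eq_1_iff)
    then show False by presburger
  qed
  show "(1/2::real) \<notin> \<int>\<^sub>\<le>\<^sub>0"
  proof
    assume "(1/2::real) \<in> \<int>\<^sub>\<le>\<^sub>0"
    then have "(1/2::real) \<le> 0" by (rule nonpos_Ints_nonpos)
    then show False by simp
  qed
qed

lemma poch_G_nat1: "poch_G (-1/2) (int a) = pochhammer (-1/2) a"
  using pochhammer_Gamma[OF half_not_nonpos_Int(1), of a] by (simp add: poch_G_def)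
lemma poch_G_nat2: "poch_G (1/2) (int a) = pochhammer (1/2) a"
  using pochhammer_Gamma[OF half_not_nonpos_Int(2), of a] by (simp add: poch_G_def)

definition ell :: "nat \<Rightarrow> nat \<Rightarrow> real" where "ell n i = LamG abs (2*n) (Qp (2*n) i) / Kc n"

lemma Kc_pos: "n \<ge> 1 \<Longrightarrow> Kc n > 0" by (simp add: Kc_def)

lemma ell_even: "n \<ge> 1 \<Longrightarrow> a \<le> n \<Longrightarrow> ell n (2*a) = fq n a"
  using Lam_Qp_even[of a n] Kc_pos[of n] by (simp add: ell_def)

lemma ell_odd: "odd i \<Longrightarrow> i \<le> 2*n \<Longrightarrow> ell n i = 0"
  by (simp add: ell_def Lam_Qp_odd)

lemma H_at:
  assumes n: "n \<ge> 1" and mn: "m \<le> n" and r: "r \<le> 2*n-2*m" and s: "s \<le> 2*m"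
    and ea: "r + s = 2*a" and eb: "r + 2*m - s = 2*b"
  shows "H (int n) (int a) (int b) (int m) =
     real ((2*n-2*m) choose r) * real ((2*m) choose s) / (fact (2*n-2*m) * fact (2*m)) * ell n (r+s) * ell n (r+2*m-s)"
proof -
  have an: "a \<le> n" and bn: "b \<le> n" using ea eb r s mn by auto
  have i1: "2 * int n - int a - int b - int m = int (2*n-2*m - r)" using ea eb r s mn by auto
  have i2: "int b - int a + int m = int (2*m - s)" using ea eb r s mn by auto
  have i3: "int a - int b + int m = int s" using ea eb r s mn by auto
  have i4: "int a + int b - int m = int r" using ea eb r s mn by auto
  have i5: "int n - int a = int (n - a)" "int n - int b = int (n - b)" using an bn by auto
  have c1: "real ((2*n-2*m) choose r) / fact (2*n-2*m) = inverse (fact r * fact (2*n-2*m-r))"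
    using r by (simp add: binomial_fact field_simps)
  have c2: "real ((2*m) choose s) / fact (2*m) = inverse (fact s * fact (2*m-s))"
    using s by (simp add: binomial_fact field_simps)
  have "H (int n) (int a) (int b) (int m) =
      (-1)^(a+b) * pochhammer (-1/2) a * pochhammer (-1/2) b * pochhammer (1/2) (n-a) * pochhammer (1/2) (n-b)
      * inverse (fact (2*n-2*m-r)) * inverse (fact (2*m-s)) * inverse (fact s) * inverse (fact r)"
    unfolding H_def i1 i2 i3 i4 i5 inv_fact_G_nat poch_G_nat1 poch_G_nat2
    by (simp add: power_int_of_nat[symmetric] del: power_int_of_nat)
  also have "\<dots> = (real ((2*n-2*m) choose r) / fact (2*n-2*m)) * (real ((2*m) choose s) / fact (2*m)) * fq n a * fq n b"
    unfolding c1 c2 fq_def by (simp add: power_add field_simps)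
  also have "\<dots> = real ((2*n-2*m) choose r) * real ((2*m) choose s) / (fact (2*n-2*m) * fact (2*m)) * ell n (r+s) * ell n (r+2*m-s)"
    unfolding ea eb using ell_even[OF n an] ell_even[OF n bn] by simp
  finally show ?thesis .
qed

lemma H_nonzero:
  assumes "H q l1 l2 k \<noteq> 0"
  shows "0 \<le> 2*q-l1-l2-k \<and> 0 \<le> l2-l1+k \<and> 0 \<le> l1-l2+k \<and> 0 \<le> l1+l2-k"
  using assms unfolding H_def inv_fact_G_eq by (auto split: if_splits)

lemma H_has_sum:
  fixes \<phi> :: "int \<Rightarrow> int \<Rightarrow> real"
  assumes n: "n \<ge> 1" and mn: "m \<le> n"
  shows "((\<lambda>(l1,l2). \<phi> l1 l2 * H (int n) l1 l2 (int m)) has_sum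
     (\<Sum>r\<le>2*n-2*m. \<Sum>s\<le>2*m. \<phi> (int ((r+s) div 2)) (int ((r+2*m-s) div 2)) *
        (real ((2*n-2*m) choose r) * real ((2*m) choose s) / (fact (2*n-2*m) * fact (2*m)) * ell n (r+s) * ell n (r+2*m-s)))) UNIV"
proof -
  define f where "f = (\<lambda>(l1,l2). \<phi> l1 l2 * H (int n) l1 l2 (int m))"
  define F where "F r s = \<phi> (int ((r+s) div 2)) (int ((r+2*m-s) div 2)) *
        (real ((2*n-2*m) choose r) * real ((2*m) choose s) / (fact (2*n-2*m) * fact (2*m)) * ell n (r+s) * ell n (r+2*m-s))" for r s
  define A where "A = {(r,s). r \<le> 2*n-2*m \<and> s \<le> 2*m \<and> even (r+s)}"
  define g where "g = (\<lambda>(r::nat,s::nat). (int ((r+s) div 2), int ((r+2*m-s) div 2)))"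
  have AB: "A \<subseteq> {..2*n-2*m} \<times> {..2*m}" by (auto simp: A_def)
  have finA: "finite A" by (rule finite_subset[OF AB]) auto
  have inj: "inj_on g A"
  proof (rule inj_onI)
    fix x y assume x: "x \<in> A" and y: "y \<in> A" and gxy: "g x = g y"
    obtain r s where xrs: "x = (r,s)" by (cases x)
    obtain r' s' where yrs: "y = (r',s')" by (cases y)
    from x have e: "even (r+s)" and sm: "s \<le> 2*m" by (auto simp: xrs A_def)
    from y have e': "even (r'+s')" and sm': "s' \<le> 2*m" by (auto simp: yrs A_def)
    from gxy have d1: "(r+s) div 2 = (r'+s') div 2" and d2: "(r+2*m-s) div 2 = (r'+2*m-s') div 2"
      by (auto simp: xrs yrs g_def)
    have e2: "even (r+2*m-s)" using e sm by presburger
    have e2': "even (r'+2*m-s')" using e' sm' by presburger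
    have a1: "r + s = r' + s'" using d1 e e' by (metis dvd_mult_div_cancel)
    have a2: "r + 2*m - s = r' + 2*m - s'" using d2 e2 e2' by (metis dvd_mult_div_cancel)
    from a1 a2 sm sm' have "r = r'" "s = s'" by arith+
    then show "x = y" by (simp add: xrs yrs)
  qed
  have fg: "f (g (r,s)) = F r s" if "(r,s) \<in> A" for r s
  proof -
    from that have r: "r \<le> 2*n-2*m" and s: "s \<le> 2*m" and e: "even (r+s)" by (auto simp: A_def)
    have ea: "r + s = 2 * ((r+s) div 2)" using e by simp
    have e2: "even (r + 2*m - s)" using e s by presburger
    have eb: "r + 2*m - s = 2 * ((r + 2*m - s) div 2)" using e2 by simp
    show ?thesis
      unfolding f_def g_def F_def using H_at[OF n mn r s ea eb] by simp
  qed
  have outside: "f x = 0" if "x \<notin> g ` A" for x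
  proof (rule ccontr)
    assume fx: "f x \<noteq> 0"
    obtain l1 l2 where x: "x = (l1,l2)" by (cases x)
    from fx have "H (int n) l1 l2 (int m) \<noteq> 0" by (auto simp: f_def x)
    from H_nonzero[OF this] have ineq: "0 \<le> 2*int n-l1-l2-int m" "0 \<le> l2-l1+int m" "0 \<le> l1-l2+int m" "0 \<le> l1+l2-int m"
      by auto
    obtain r where r: "l1+l2-int m = int r" using ineq(4) by (metis zero_le_imp_eq_int)
    obtain s where s: "l1-l2+int m = int s" using ineq(3) by (metis zero_le_imp_eq_int)
    have l1: "l1 = int ((r+s) div 2)"
    proof -
      have "int ((r+s) div 2) = int (r+s) div 2" by (simp add: zdiv_int)
      also have "int (r+s) = 2 * l1" using r s by linarith
      finally show ?thesis by simp
    qed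
    have l2: "l2 = int ((r+2*m-s) div 2)"
    proof -
      have "int ((r+2*m-s) div 2) = int (r+2*m-s) div 2" by (simp add: zdiv_int)
      also have "int (r+2*m-s) = 2 * l2" using r s ineq by linarith
      finally show ?thesis by simp
    qed
    have rs2: "int r + int s = 2 * l1" using r s by linarith
    have rs3: "int r + 2 * int m - int s = 2 * l2" using r s by linarith
    have "int r \<le> 2 * int n - 2 * int m" using r ineq(1) by linarith
    then have rb: "r \<le> 2*n-2*m" using mn by linarith
    have sb: "s \<le> 2*m" using s ineq(2) by linarith
    have ev: "even (r+s)"
    proof -
      have "int (r+s) = 2 * l1" using rs2 by simp
      then have "even (int (r+s))" by simp
      then show ?thesis by simp
    qed
    have "(r,s) \<in> A" unfolding A_def using rb sb ev by simp
    moreover have "g (r,s) = x" unfolding g_def x using l1 l2 by simp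
    ultimately show False using that by blast
  qed
  have 1: "(f has_sum sum f (g ` A)) (g ` A)" using finA by simp
  have 2: "(f has_sum sum f (g ` A)) UNIV"
    using 1 by (subst has_sum_cong_neutral[where T="g ` A" and g=f]) (auto intro: outside)
  have "sum f (g ` A) = sum (f \<circ> g) A" by (rule sum.reindex[OF inj])
  also have "\<dots> = (\<Sum>(r,s)\<in>A. F r s)" by (intro sum.cong refl) (auto simp: fg)
  also have "\<dots> = (\<Sum>(r,s)\<in>{..2*n-2*m} \<times> {..2*m}. F r s)"
  proof (rule sum.mono_neutral_left[OF _ AB])
    show "finite ({..2*n-2*m} \<times> {..2*m})" by simp
    show "\<forall>i\<in>{..2 * n - 2 * m} \<times> {..2 * m} - A. (case i of (r, s) \<Rightarrow> F r s) = 0"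
    proof
      fix i assume i: "i \<in> {..2 * n - 2 * m} \<times> {..2 * m} - A"
      obtain r s where irs: "i = (r,s)" by (cases i)
      from i have "odd (r+s)" "r + s \<le> 2*n" using mn by (auto simp: irs A_def)
      then have "ell n (r+s) = 0" by (rule ell_odd)
      then show "(case i of (r, s) \<Rightarrow> F r s) = 0" by (simp add: irs F_def)
    qed
  qed
  also have "\<dots> = (\<Sum>r\<le>2*n-2*m. \<Sum>s\<le>2*m. F r s)" by (rule sum.cartesian_product[symmetric])
  finally show ?thesis using 2 unfolding f_def F_def by simp
qed

lemma sum_ell:
  assumes n: "n \<ge> 1"
  shows "(\<Sum>r\<le>R. \<Sum>s\<le>S. w r * (real (A choose r) * real (B choose s) / (fact A * fact B) * ell n (e1 r s) * ell n (e2 r s)))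
       = (\<Sum>r\<le>R. \<Sum>s\<le>S. w r * real (A choose r) * real (B choose s) * (LamG abs (2*n) (Qp (2*n) (e1 r s)) * LamG abs (2*n) (Qp (2*n) (e2 r s))))
         / (fact A * fact B * (Kc n)^2)"
proof -
  have "Kc n \<noteq> 0" using Kc_pos[OF n] by simp
  then show ?thesis
    unfolding sum_divide_distrib ell_def by (intro sum.cong refl) (simp add: field_simps power2_eq_square)
qed

lemma absorb_sum:
  assumes "M \<ge> 1"
  shows "(\<Sum>r\<le>M. real (M - r) * real (M choose r) * Y r) = real M * (\<Sum>r\<le>M-1. real ((M-1) choose r) * (Y r :: real))"
proof -
  have "(\<Sum>r\<le>M. real (M - r) * real (M choose r) * Y r) = (\<Sum>r\<le>M. real M * (real ((M-1) choose r) * Y r))"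
  proof (intro sum.cong refl)
    fix r
    have "real (M - r) * real (M choose r) = real ((M - r) * (M choose r))" by simp
    also have "\<dots> = real (M * ((M-1) choose r))" by (simp only: binomial_absorb_comp)
    finally show "real (M - r) * real (M choose r) * Y r = real M * (real ((M-1) choose r) * Y r)" by simp
  qed
  also have "\<dots> = real M * (\<Sum>r\<le>M. real ((M-1) choose r) * Y r)" by (simp add: sum_distrib_left)
  also have "(\<Sum>r\<le>M. real ((M-1) choose r) * Y r) = (\<Sum>r\<le>M-1. real ((M-1) choose r) * Y r)"
  proof -
    have "{..M} = insert M {..M-1}" using assms by auto
    then show ?thesis using assms by (simp add: binomial_eq_0)
  qed
  finally show ?thesis .
qed

lemma cq_val: "n \<ge> 1 \<Longrightarrow> c_q n / 2^(4*n) = fact n * fact n / (2 * real n * fact (2*n))"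
proof -
  assume n: "n \<ge> 1"
  have b: "real ((2*n) choose n) = fact (2*n) / (fact n * fact n)" by (simp add: binomial_fact mult_2)
  show ?thesis unfolding c_q_def b using n by (simp add: field_simps)
qed

lemma fact2: "n \<ge> 1 \<Longrightarrow> (fact (2*n) :: real) = real (2*n) * real (2*n-1) * fact (2*n-2)"
proof -
  assume n: "n \<ge> 1"
  then obtain j where j: "n = Suc j" by (cases n) auto
  have e1: "2*n = Suc (Suc (2*j))" and e2: "2*n-2 = 2*j" and e3: "2*n-1 = Suc (2*j)" using j by auto
  show ?thesis unfolding e1 e2 e3 by (simp add: algebra_simps)
qed

lemma p2: "(2::real)^(2*n) = 4^n" "(2::real)^(4*n) = (4^n)^2"
  by (induction n) (simp_all add: power_add power_mult_distrib)

lemma Kc_sq: "(Kc n)^2 = 4 * (4^n)^2 * (real n)^2 / (fact n)^2"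
  by (simp add: Kc_def power_mult_distrib power_divide)

lemma cq2: "c_q n = (4^n)^2 * fact n * fact n / (2 * real n * fact (2*n))"
proof -
  have b: "real ((2*n) choose n) = fact (2*n) / (fact n * fact n)" by (simp add: binomial_fact mult_2)
  show ?thesis unfolding c_q_def b p2 by (simp add: field_simps)
qed

lemma num_H0: "n \<ge> 1 \<Longrightarrow> 2^(2*n) * (real (2*n) * 2^(2*n)) / (fact (2*n) * fact 0 * (Kc n)^2) = c_q n / 2^(4*n)"
  unfolding cq2 Kc_sq p2 by (simp add: field_simps power2_eq_square)

lemma num_H1: "n \<ge> 1 \<Longrightarrow> 2^(2*n) * 2^(2*n+1) / (fact (2*n-2) * fact 2 * (Kc n)^2) = (2 * real n - 1) * c_q n / 2^(4*n)"
proof -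
  assume n: "n \<ge> 1"
  have "real n \<ge> 1" using n by simp
  then show ?thesis
    unfolding cq2 Kc_sq power_add p2 fact2[OF n] using n by (simp add: field_simps power2_eq_square of_nat_diff)
qed

lemma num_H'0: "n \<ge> 1 \<Longrightarrow> real (2*n) * (2^(2*n+1) * (real (2*n-1) * 2^(2*n-1))) / (fact (2*n) * fact 0 * (Kc n)^2) = (2 * real n - 1) * c_q n / 2^(4*n)"
proof -
  assume n: "n \<ge> 1"
  have e: "(2::real)^(2*n+1) * 2^(2*n-1) = 2^(2*n) * 2^(2*n)"
  proof -
    have "2*n+1 + (2*n-1) = 2*n + 2*n" using n by simp
    then show ?thesis by (metis power_add)
  qed
  have "real (2*n) * (2^(2*n+1) * (real (2*n-1) * 2^(2*n-1))) = real (2*n-1) * (2^(2*n) * (real (2*n) * 2^(2*n)))"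
    using e by (simp add: mult_ac)
  then have "real (2*n) * (2^(2*n+1) * (real (2*n-1) * 2^(2*n-1))) / (fact (2*n) * fact 0 * (Kc n)^2)
     = real (2*n-1) * (2^(2*n) * (real (2*n) * 2^(2*n)) / (fact (2*n) * fact 0 * (Kc n)^2))" by simp
  also have "\<dots> = real (2*n-1) * (c_q n / 2^(4*n))" using num_H0[OF n] by simp
  finally show ?thesis using n by (simp add: of_nat_diff)
qed

lemma num_H'1: "n \<ge> 1 \<Longrightarrow> real (2*n-2) * (2^(2*n+1) * 2^(2*n)) / (fact (2*n-2) * fact 2 * (Kc n)^2) = (2 * real n - 1) * (2 * real n - 2) * c_q n / 2^(4*n)"
proof -
  assume n: "n \<ge> 1"
  have "real (2*n-2) * (2^(2*n+1) * 2^(2*n)) / (fact (2*n-2) * fact 2 * (Kc n)^2) = real (2*n-2) * (2^(2*n) * 2^(2*n+1) / (fact (2*n-2) * fact 2 * (Kc n)^2))"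
    by (simp add: mult_ac)
  also have "\<dots> = real (2*n-2) * ((2 * real n - 1) * c_q n / 2^(4*n))" using num_H1[OF n] by simp
  finally show ?thesis using n by (simp add: of_nat_diff mult_ac)
qed

theorem proposition7p3:
  fixes q k :: int
  assumes "q \<ge> 1" and "k \<ge> 0"
  shows "(((\<lambda>(l1, l2). H q l1 l2 k) has_sum
           (if k \<ge> 2 then 0
            else if k = 1 then (2 * of_int q - 1) * c_q (nat q) / 2 ^ (4 * nat q)
            else c_q (nat q) / 2 ^ (4 * nat q))) (UNIV :: (int \<times> int) set))
       \<and> (((\<lambda>(l1, l2). H' q l1 l2 k) has_sum
           (if k \<ge> 2 then 0
            else if k = 1 then (2 * of_int q - 1) * (2 * of_int q - 2) * c_q (nat q) / 2 ^ (4 * nat q)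
            else (2 * of_int q - 1) * c_q (nat q) / 2 ^ (4 * nat q))) (UNIV :: (int \<times> int) set))"
proof -
  define n where "n = nat q"
  define m where "m = nat k"
  have qn: "q = int n" and km: "k = int m" using assms by (auto simp: n_def m_def)
  have n1: "n \<ge> 1" using assms(1) qn by simp
  have cqn: "nat q = n" by (simp add: n_def)
  show ?thesis
  proof (cases "m \<le> n")
    case False
    have z: "H q l1 l2 k = 0" for l1 l2
    proof (rule ccontr)
      assume "H q l1 l2 k \<noteq> 0"
      from H_nonzero[OF this] have "k \<le> q" by linarith
      with False show False using qn km by simp
    qed
    have k2: "k \<ge> 2" using False n1 qn km by simp
    have f1: "(\<lambda>(l1,l2). H q l1 l2 k) = (\<lambda>_. 0)" by (auto simp: z)
    have f2: "(\<lambda>(l1,l2). H' q l1 l2 k) = (\<lambda>_. 0)" by (auto simp: z H'_def)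
    show ?thesis using k2 unfolding f1 f2 by simp
  next
    case True
    define M where "M = 2*n-2*m"
    define Lm where "Lm r s = LamG abs (2*n) (Qp (2*n) (r+s)) * LamG abs (2*n) (Qp (2*n) (r+2*m-s))" for r s
    define D where "D = fact M * fact (2*m) * (Kc n)^2"
    define T where "T r s = real (M choose r) * real ((2*m) choose s) / (fact M * fact (2*m)) * ell n (r+s) * ell n (r+2*m-s)" for r s
    have S1: "((\<lambda>(l1,l2). H q l1 l2 k) has_sum (2^(2*n) * LamG (\<lambda>t. t^2) (2*n) (Qp (2*n) (2*m)) / D)) UNIV"
    proof -
      have hs: "((\<lambda>(l1,l2). 1 * H (int n) l1 l2 (int m)) has_sum (\<Sum>r\<le>M. \<Sum>s\<le>2*m. 1 * T r s)) UNIV"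
        using H_has_sum[OF n1 True, where \<phi>="\<lambda>_ _. 1"] unfolding M_def T_def by simp
      have fe: "(\<lambda>(l1,l2). 1 * H (int n) l1 l2 (int m)) = (\<lambda>(l1,l2). H q l1 l2 k)" by (simp add: qn km)
      have "(\<Sum>r\<le>M. \<Sum>s\<le>2*m. 1 * T r s) = (\<Sum>r\<le>M. \<Sum>s\<le>2*m. (\<lambda>_. 1) r * real (M choose r) * real ((2*m) choose s) * Lm r s) / D"
        unfolding T_def Lm_def D_def by (rule sum_ell[OF n1])
      also have "(\<Sum>r\<le>M. \<Sum>s\<le>2*m. (\<lambda>_. 1) r * real (M choose r) * real ((2*m) choose s) * Lm r s) = 2^(2*n) * LamG (\<lambda>t. t^2) (2*n) (Qp (2*n) (2*m))"
        using core_H[OF True] unfolding Lm_def M_def by simp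
      finally show ?thesis using hs fe by simp
    qed
    have S2: "((\<lambda>(l1,l2). H' q l1 l2 k) has_sum ((if m = n then 0 else real M * (2^(2*n+1) * LamG (\<lambda>t. t^2) (2*n-1) (Qp (2*n-1) (2*m)))) / D)) UNIV"
    proof -
      have hs: "((\<lambda>(l1,l2). of_int (2 * int n - l1 - l2 - int m) * H (int n) l1 l2 (int m)) has_sum
          (\<Sum>r\<le>M. \<Sum>s\<le>2*m. of_int (2 * int n - int ((r+s) div 2) - int ((r+2*m-s) div 2) - int m) * T r s)) UNIV"
        using H_has_sum[OF n1 True, where \<phi>="\<lambda>l1 l2. of_int (2 * int n - l1 - l2 - int m)"] unfolding M_def T_def by simp
      have fe: "(\<lambda>(l1,l2). of_int (2 * int n - l1 - l2 - int m) * H (int n) l1 l2 (int m)) = (\<lambda>(l1,l2). H' q l1 l2 k)"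
        by (simp add: qn km H'_def)
      have "(\<Sum>r\<le>M. \<Sum>s\<le>2*m. of_int (2 * int n - int ((r+s) div 2) - int ((r+2*m-s) div 2) - int m) * T r s)
          = (\<Sum>r\<le>M. \<Sum>s\<le>2*m. real (M - r) * T r s)"
      proof (intro sum.cong refl)
        fix r s assume r: "r \<in> {..M}" and s: "s \<in> {..2*m}"
        show "of_int (2 * int n - int ((r+s) div 2) - int ((r+2*m-s) div 2) - int m) * T r s = real (M - r) * T r s"
        proof (cases "even (r+s)")
          case True
          have e2: "even (r+2*m-s)" using True s by auto
          have "int ((r+s) div 2) + int ((r+2*m-s) div 2) = int r + int m"
          proof -
            have a: "2 * int ((r+s) div 2) = int r + int s" using True by (metis dvd_mult_div_cancel of_nat_add of_nat_mult of_nat_numeral)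
            have b: "2 * int ((r+2*m-s) div 2) = int r + 2 * int m - int s" using e2 s
              by (metis (no_types, lifting) atMost_iff dvd_mult_div_cancel le_add2 of_nat_add of_nat_diff of_nat_mult of_nat_numeral order_trans)
            from a b show ?thesis by linarith
          qed
          then have "2 * int n - int ((r+s) div 2) - int ((r+2*m-s) div 2) - int m = int (M - r)"
            using r True unfolding M_def using \<open>m \<le> n\<close> by auto
          then show ?thesis by (metis of_int_of_nat_eq)
        next
          case False
          have "r + s \<le> 2*n" using r s True unfolding M_def by auto
          then have "ell n (r+s) = 0" using False by (intro ell_odd) auto
          then show ?thesis by (simp add: T_def)
        qed
      qed
      also have "\<dots> = (\<Sum>r\<le>M. \<Sum>s\<le>2*m. (\<lambda>r. real (M - r)) r * real (M choose r) * real ((2*m) choose s) * Lm r s) / D"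
        unfolding T_def Lm_def D_def by (rule sum_ell[OF n1])
      also have "(\<Sum>r\<le>M. \<Sum>s\<le>2*m. (\<lambda>r. real (M - r)) r * real (M choose r) * real ((2*m) choose s) * Lm r s)
          = (if m = n then 0 else real M * (2^(2*n+1) * LamG (\<lambda>t. t^2) (2*n-1) (Qp (2*n-1) (2*m))))"
      proof (cases "m = n")
        case True
        then have "M = 0" by (simp add: M_def)
        then show ?thesis using True by simp
      next
        case False
        then have mn: "m < n" using \<open>m \<le> n\<close> by simp
        have M1: "M \<ge> 1" using mn by (simp add: M_def)
        have "(\<Sum>r\<le>M. \<Sum>s\<le>2*m. (\<lambda>r. real (M - r)) r * real (M choose r) * real ((2*m) choose s) * Lm r s)
            = (\<Sum>r\<le>M. real (M - r) * real (M choose r) * (\<Sum>s\<le>2*m. real ((2*m) choose s) * Lm r s))"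
          by (simp add: sum_distrib_left mult_ac)
        also have "\<dots> = real M * (\<Sum>r\<le>M-1. real ((M-1) choose r) * (\<Sum>s\<le>2*m. real ((2*m) choose s) * Lm r s))"
          by (rule absorb_sum[OF M1])
        also have "(\<Sum>r\<le>M-1. real ((M-1) choose r) * (\<Sum>s\<le>2*m. real ((2*m) choose s) * Lm r s))
            = (\<Sum>r\<le>2*n-2*m-1. \<Sum>s\<le>2*m. real ((2*n-2*m-1) choose r) * real ((2*m) choose s) * Lm r s)"
          by (simp add: sum_distrib_left mult_ac M_def)
        also have "\<dots> = 2^(2*n+1) * LamG (\<lambda>t. t^2) (2*n-1) (Qp (2*n-1) (2*m))"
          using core_H2[OF mn] unfolding Lm_def by simp
        finally show ?thesis using False by simp
      qed
      finally show ?thesis using hs fe by simp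
    qed
    have sq1: "LamG (\<lambda>t. t^2) (2*n) (Qp (2*n) (2*m)) = (if m = 0 then real (2*n) * 2^(2*n) else if m = 1 then 2^(2*n+1) else 0)"
      using Sq_Qp[of m "2*n"] True by simp
    have Dv: "D = fact M * fact (2*m) * (Kc n)^2" by (simp add: D_def)
    consider "m = 0" | "m = 1" | "m \<ge> 2" by linarith
    then show ?thesis
    proof cases
      case 1
      have v1: "2^(2*n) * LamG (\<lambda>t. t^2) (2*n) (Qp (2*n) (2*m)) / D = c_q n / 2^(4*n)"
        using num_H0[OF n1] 1 unfolding sq1 Dv M_def by simp
      have sq2: "LamG (\<lambda>t. t^2) (2*n-1) (Qp (2*n-1) (2*m)) = real (2*n-1) * 2^(2*n-1)"
        using Sq_Qp[of m "2*n-1"] 1 by simp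
      have mn: "m \<noteq> n" using 1 n1 by simp
      have v2: "(if m = n then 0 else real M * (2^(2*n+1) * LamG (\<lambda>t. t^2) (2*n-1) (Qp (2*n-1) (2*m)))) / D = (2 * real n - 1) * c_q n / 2^(4*n)"
        using num_H'0[OF n1] 1 mn unfolding sq2 Dv M_def by simp
      show ?thesis using S1 S2 unfolding v1 v2 using 1 km qn cqn mn by simp
    next
      case 2
      have v1: "2^(2*n) * LamG (\<lambda>t. t^2) (2*n) (Qp (2*n) (2*m)) / D = (2 * real n - 1) * c_q n / 2^(4*n)"
        using num_H1[OF n1] 2 unfolding sq1 Dv M_def by simp
      have v2: "(if m = n then 0 else real M * (2^(2*n+1) * LamG (\<lambda>t. t^2) (2*n-1) (Qp (2*n-1) (2*m)))) / D
          = (2 * real n - 1) * (2 * real n - 2) * c_q n / 2^(4*n)"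
      proof (cases "m = n")
        case True
        then have "n = 1" using 2 by simp
        then show ?thesis using True by simp
      next
        case False
        then have n2: "2*m \<le> 2*n-1" using \<open>m \<le> n\<close> by simp
        have sq2: "LamG (\<lambda>t. t^2) (2*n-1) (Qp (2*n-1) (2*m)) = 2^(2*n)"
          using Sq_Qp[OF n2] 2 n1 by simp
        show ?thesis using num_H'1[OF n1] 2 False unfolding sq2 Dv M_def by simp
      qed
      show ?thesis using S1 S2 unfolding v1 v2 using 2 km qn cqn by simp
    next
      case 3
      have v1: "2^(2*n) * LamG (\<lambda>t. t^2) (2*n) (Qp (2*n) (2*m)) / D = 0"
        using 3 unfolding sq1 by simp
      have v2: "(if m = n then 0 else real M * (2^(2*n+1) * LamG (\<lambda>t. t^2) (2*n-1) (Qp (2*n-1) (2*m)))) / D = 0"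
      proof (cases "m = n")
        case False
        then have n2: "2*m \<le> 2*n-1" using \<open>m \<le> n\<close> by simp
        show ?thesis using Sq_Qp[OF n2] 3 False by simp
      qed simp
      have k2: "k \<ge> 2" using 3 km by simp
      show ?thesis using S1 S2 unfolding v1 v2 using k2 by simp
    qed
  qed
qed

end
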